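(* Let $G$ be a modular noetherian right $\ell$-group with strong order unit $s$ and degree homomorphism $\deg$. For $g \in G^-$, the sequence \[ \iota_i(g) := \deg(g \vee s^{-i}) - \deg(g \vee s^{-(i-1)}) \qquad (i \geq 1) \] is non-increasing.
   Context: A right $\ell$-group is a group $G$ (identity $e$) with a right-invariant partial order making $G$ a lattice. It is modular if the lattice is modular. It is noetherian if for each $g$ the set $\{h \geq g\}$ satisfies the descending chain condition and the set $\{h \leq g\}$ satisfies the ascending chain condition. $G^- = \{g \leq e\}$. A strong order unit is an element $s > e$ such that $x \mapsto sx$ is a lattice automorphism of $G$ and every $g$ satisfies $g \leq s^k$ for some $k \in \mathbb{Z}$. The degree homomorphism $\deg : G \to \mathbb{Z}$ is the unique group homomorphism sending each $g \in G^-$ to the (well-defined) number of factors in any factorization of $g$ into elements covered by $e$. *)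

theory Defs
  imports "HOL-Algebra.Group"
begin

definition right_l_group :: "('a::lattice) monoid \<Rightarrow> bool" where
  "right_l_group G \<longleftrightarrow> group G \<and> carrier G = UNIV \<and>
     (\<forall>x y z. x \<le> y \<longrightarrow> x \<otimes>\<^bsub>G\<^esub> z \<le> y \<otimes>\<^bsub>G\<^esub> z)"

definition modular_lattice :: "('a::lattice) itself \<Rightarrow> bool" where
  "modular_lattice _ \<longleftrightarrow> (\<forall>x y z::'a. x \<le> z \<longrightarrow> sup x (inf y z) = inf (sup x y) z)"

definition dcc_on :: "('a::order) set \<Rightarrow> bool" where
  "dcc_on S \<longleftrightarrow> \<not> (\<exists>f::nat \<Rightarrow> 'a. (\<forall>n. f n \<in> S) \<and> (\<forall>n. f (Suc n) < f n))"

definition acc_on :: "('a::order) set \<Rightarrow> bool" where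
  "acc_on S \<longleftrightarrow> \<not> (\<exists>f::nat \<Rightarrow> 'a. (\<forall>n. f n \<in> S) \<and> (\<forall>n. f n < f (Suc n)))"

definition noetherian :: "('a::order) itself \<Rightarrow> bool" where
  "noetherian _ \<longleftrightarrow> (\<forall>g::'a. dcc_on {h. g \<le> h} \<and> acc_on {h. h \<le> g})"

definition strong_order_unit :: "('a::lattice) monoid \<Rightarrow> 'a \<Rightarrow> bool" where
  "strong_order_unit G s \<longleftrightarrow> \<one>\<^bsub>G\<^esub> < s \<and>
     bij (\<lambda>x. s \<otimes>\<^bsub>G\<^esub> x) \<and>
     (\<forall>x y. (s \<otimes>\<^bsub>G\<^esub> x \<le> s \<otimes>\<^bsub>G\<^esub> y) \<longleftrightarrow> x \<le> y) \<and>
     (\<forall>g. \<exists>k::int. g \<le> s [^]\<^bsub>G\<^esub> k)"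

definition covered_by_one :: "('a::order) monoid \<Rightarrow> 'a \<Rightarrow> bool" where
  "covered_by_one G a \<longleftrightarrow> a < \<one>\<^bsub>G\<^esub> \<and> \<not> (\<exists>c. a < c \<and> c < \<one>\<^bsub>G\<^esub>)"

definition degree_hom :: "('a::order) monoid \<Rightarrow> ('a \<Rightarrow> int) \<Rightarrow> bool" where
  "degree_hom G deg \<longleftrightarrow>
     (\<forall>x y. deg (x \<otimes>\<^bsub>G\<^esub> y) = deg x + deg y) \<and>
     (\<forall>g xs. g \<le> \<one>\<^bsub>G\<^esub> \<longrightarrow> (\<forall>a\<in>set xs. covered_by_one G a) \<longrightarrow>
        foldr (\<lambda>a b. a \<otimes>\<^bsub>G\<^esub> b) xs \<one>\<^bsub>G\<^esub> = g \<longrightarrow> deg g = int (length xs))"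

definition iota :: "('a::lattice) monoid \<Rightarrow> ('a \<Rightarrow> int) \<Rightarrow> 'a \<Rightarrow> 'a \<Rightarrow> nat \<Rightarrow> int" where
  "iota G deg s g i = deg (sup g (s [^]\<^bsub>G\<^esub> (- int i))) - deg (sup g (s [^]\<^bsub>G\<^esub> (- (int i - 1))))"

end

theory Submission
  imports Defs
begin

locale rlg = group G
  for G :: "('a::lattice) monoid" (structure) +
  fixes s :: 'a and deg :: "'a \<Rightarrow> int"
  assumes rl: "right_l_group G"
    and md: "modular_lattice TYPE('a)"
    and nt: "noetherian TYPE('a)"
    and su: "strong_order_unit G s"
    and dh: "degree_hom G deg"
begin

lemma carr[simp]: "x \<in> carrier G"
  using rl unfolding right_l_group_def by auto

lemma mono_r: "x \<le> y \<Longrightarrow> x \<otimes> z \<le> y \<otimes> z"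
  using rl unfolding right_l_group_def by auto

lemma strict_r: "x < y \<Longrightarrow> x \<otimes> z < y \<otimes> z"
proof -
  assume a: "x < y"
  then have "x \<otimes> z \<le> y \<otimes> z" using mono_r by simp
  moreover have "x \<otimes> z \<noteq> y \<otimes> z" using a by auto
  ultimately show ?thesis by (simp add: less_le)
qed

lemma modl: "(x::'a) \<le> z \<Longrightarrow> sup x (inf y z) = inf (sup x y) z"
  using md unfolding modular_lattice_def by blast

definition cov :: "'a \<Rightarrow> 'a \<Rightarrow> bool" where
  "cov a b \<longleftrightarrow> a < b \<and> \<not> (\<exists>c. a < c \<and> c < b)"

lemma deg_mult: "deg (x \<otimes> y) = deg x + deg y"
  using dh unfolding degree_hom_def by blast

lemma cover_deg:
  assumes "cov a b" shows "deg a = deg b + 1"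
proof -
  define c where "c = a \<otimes> inv b"
  have ab: "a < b" using assms cov_def by auto
  have acb: "a = c \<otimes> b" unfolding c_def by (simp add: m_assoc)
  have "c \<le> \<one>" using mono_r[of a b "inv b"] ab unfolding c_def by simp
  moreover have "c \<noteq> \<one>"
  proof
    assume "c = \<one>" then have "a = b" using acb by simp
    then show False using ab by simp
  qed
  ultimately have c1: "c < \<one>" by simp
  have "\<not> (\<exists>d. c < d \<and> d < \<one>)"
  proof
    assume "\<exists>d. c < d \<and> d < \<one>"
    then obtain d where d: "c < d" "d < \<one>" by blast
    have "a < d \<otimes> b" using strict_r[OF d(1), of b] acb by simp
    moreover have "d \<otimes> b < b" using strict_r[OF d(2), of b] by simp
    ultimately show False using assms cov_def by blast
  qed
  with c1 have cc: "covered_by_one G c" unfolding covered_by_one_def by blast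
  have h: "\<forall>g xs. g \<le> \<one> \<longrightarrow> (\<forall>a\<in>set xs. covered_by_one G a) \<longrightarrow>
        foldr (\<lambda>a b. a \<otimes> b) xs \<one> = g \<longrightarrow> deg g = int (length xs)"
    using dh unfolding degree_hom_def by blast
  have "deg c = int (length [c])"
    using h[rule_format, of c "[c]"] c1 cc by simp
  then have "deg c = 1" by simp
  then show ?thesis using deg_mult acb by simp
qed

lemma exists_cover:
  assumes "u < w" shows "\<exists>z. u \<le> z \<and> cov z w"
proof -
  define r where "r = {(y,x). x \<le> w \<and> y \<le> w \<and> x < y}"
  have "acc_on {h. h \<le> w}" using nt unfolding noetherian_def by blast
  then have wfr: "wf r" unfolding r_def acc_on_def wf_iff_no_infinite_down_chain by auto
  define S where "S = {h. u \<le> h \<and> h < w}"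
  have "u \<in> S" using assms S_def by auto
  then obtain z where z: "z \<in> S" "\<And>y. (y,z) \<in> r \<Longrightarrow> y \<notin> S"
    using wfE_min[OF wfr] by metis
  show ?thesis
  proof (intro exI conjI)
    show "u \<le> z" using z S_def by auto
    show "cov z w" unfolding cov_def
    proof (intro conjI notI)
      show "z < w" using z S_def by auto
      assume "\<exists>c. z < c \<and> c < w"
      then obtain c where "z < c" "c < w" by blast
      then have "(c,z) \<in> r" "c \<in> S" using z(1) unfolding r_def S_def by auto
      then show False using z(2) by blast
    qed
  qed
qed

lemma interval_induct:
  assumes "u \<le> w" "P u" "\<And>z w. u \<le> z \<Longrightarrow> cov z w \<Longrightarrow> P z \<Longrightarrow> P w"
  shows "P w"
proof -
  define r where "r = {(y,x). u \<le> x \<and> u \<le> y \<and> y < x}"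
  have "dcc_on {h. u \<le> h}" using nt unfolding noetherian_def by blast
  then have wfr: "wf r" unfolding r_def dcc_on_def wf_iff_no_infinite_down_chain by auto
  have "u \<le> w \<longrightarrow> P w"
  proof (induction w rule: wf_induct_rule[OF wfr])
    case (1 w)
    show ?case
    proof
      assume uw: "u \<le> w"
      show "P w"
      proof (cases "u = w")
        case True then show ?thesis using assms(2) by simp
      next
        case False
        then have "u < w" using uw by simp
        then obtain z where z: "u \<le> z" "cov z w" using exists_cover by blast
        then have "(z, w) \<in> r" unfolding r_def cov_def by auto
        then have "P z" using 1 z by blast
        then show ?thesis using assms(3) z by blast
      qed
    qed
  qed
  then show ?thesis using assms(1) by blast
qed

lemma antitone: "u \<le> w \<Longrightarrow> deg w \<le> deg u"
  by (rule interval_induct[where P="\<lambda>w. deg w \<le> deg u"]) (auto dest: cover_deg)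

lemma valuation: "deg (inf x y) - deg y = deg x - deg (sup x y)"
proof -
  have "w \<le> y \<longrightarrow> deg (inf x y) - deg w = deg x - deg (sup x w)" if "inf x y \<le> w" for w
  proof (rule interval_induct[OF that, where P="\<lambda>w. w \<le> y \<longrightarrow> deg (inf x y) - deg w = deg x - deg (sup x w)"])
    show "inf x y \<le> y \<longrightarrow> deg (inf x y) - deg (inf x y) = deg x - deg (sup x (inf x y))"
      by (simp add: sup_absorb1)
  next
    fix z w
    assume u: "inf x y \<le> z" and c: "cov z w"
      and IH: "z \<le> y \<longrightarrow> deg (inf x y) - deg z = deg x - deg (sup x z)"
    show "w \<le> y \<longrightarrow> deg (inf x y) - deg w = deg x - deg (sup x w)"
    proof
      assume wy: "w \<le> y"
      have zw: "z < w" using c cov_def by auto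
      have "cov (sup x z) (sup x w)" unfolding cov_def
      proof (intro conjI notI)
        have le: "sup x z \<le> sup x w" using zw by (simp add: le_supI2)
        have "inf x w \<le> z" using u wy by (meson inf_mono order_refl order_trans)
        then have eq: "sup z (inf x w) = z" by (simp add: sup_absorb1)
        have "sup z (inf x w) = inf (sup z x) w" using modl zw by simp
        then have "z = inf (sup x z) w" using eq by (simp add: sup_commute)
        show "sup x z < sup x w"
        proof (rule ccontr)
          assume "\<not> sup x z < sup x w"
          then have "sup x z = sup x w" using le order.not_eq_order_implies_strict by blast
          then have "z = inf (sup x w) w" using \<open>z = inf (sup x z) w\<close> by simp
          then have "z = w" by (simp add: inf_absorb2)
          then show False using zw by simp
        qed
        assume "\<exists>c. sup x z < c \<and> c < sup x w"
        then obtain d where d: "sup x z < d" "d < sup x w" by blast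
        have m: "sup (sup x z) (inf w d) = inf (sup (sup x z) w) d"
          using modl[of "sup x z" d w] less_imp_le[OF d(1)] by blast
        have "sup (sup x z) w = sup x w" using zw by (simp add: sup.absorb2 sup_assoc)
        then have m2: "sup (sup x z) (inf w d) = d" using m d(2) by (simp add: inf_absorb2)
        have zd: "z \<le> inf w d" using zw d(1) by (meson le_inf_iff less_imp_le sup.cobounded2 order_trans)
        show False
        proof (cases "inf w d = z")
          case True then show ?thesis using m2 d(1) by (simp add: sup_absorb1)
        next
          case False
          then have "z < inf w d" using zd order.not_eq_order_implies_strict by metis
          moreover have "inf w d < w"
          proof (rule ccontr)
            assume "\<not> inf w d < w"
            then have "w \<le> d" by (metis inf.cobounded1 inf.absorb_iff1 order.not_eq_order_implies_strict inf.commute)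
            then have "sup x w \<le> d" using d(1) by (meson le_sup_iff less_imp_le)
            then show False using d(2) leD by blast
          qed
          ultimately show False using c cov_def by blast
        qed
      qed
      then have "deg (sup x z) = deg (sup x w) + 1" by (rule cover_deg)
      moreover have "deg z = deg w + 1" using c by (rule cover_deg)
      moreover have "z \<le> y" using zw wy by simp
      ultimately show "deg (inf x y) - deg w = deg x - deg (sup x w)" using IH by simp
    qed
  qed
  then show ?thesis by simp
qed

lemma s_pos: "\<one> < s" using su unfolding strong_order_unit_def by blast

lemma s_le: "x \<le> s \<otimes> x"
  using mono_r[of "\<one>" s x] s_pos by simp

lemma s_sup: "s \<otimes> sup a b = sup (s \<otimes> a) (s \<otimes> b)"
proof -
  have emb: "\<And>x y. (s \<otimes> x \<le> s \<otimes> y) \<longleftrightarrow> x \<le> y" and bj: "bij (\<lambda>x. s \<otimes> x)"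
    using su unfolding strong_order_unit_def by blast+
  obtain c where c: "sup (s \<otimes> a) (s \<otimes> b) = s \<otimes> c" using bj by (metis bij_pointE)
  have "a \<le> c" "b \<le> c" using c emb by (metis sup_ge1 sup_ge2)+
  then have "s \<otimes> sup a b \<le> s \<otimes> c" using emb by simp
  moreover have "sup (s \<otimes> a) (s \<otimes> b) \<le> s \<otimes> sup a b" using emb by simp
  ultimately show ?thesis using c by simp
qed

lemma sT: "s \<otimes> s [^] (n::int) = s [^] (n + 1)"
  by (simp add: int_pow_mult add.commute[of n 1] int_pow_1)

lemma step:
  fixes m :: int
  shows "deg (sup g (s [^] (m - 1))) - deg (sup g (s [^] m))
   \<le> deg (sup g (s [^] m)) - deg (sup g (s [^] (m + 1)))"
proof -
  define t where "t = s [^] (m + 1)"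
  define b where "b = sup g (s [^] m)"
  define x where "x = sup (s \<otimes> g) (s [^] m)"
  have Tm: "s [^] m \<le> t" unfolding t_def using s_le[of "s [^] m"] sT[of m] by simp
  have e1: "s \<otimes> sup g (s [^] (m - 1)) = x" unfolding x_def using s_sup sT[of "m - 1"] by simp
  have e2: "s \<otimes> sup g (s [^] m) = sup x t" unfolding x_def t_def using s_sup sT[of m] Tm t_def
    by (simp add: sup_assoc sup.absorb2)
  have L: "deg (sup g (s [^] (m - 1))) - deg (sup g (s [^] m)) = deg x - deg (sup x t)"
    using deg_mult[of s "sup g (s [^] (m - 1))"] deg_mult[of s "sup g (s [^] m)"] e1 e2 by simp
  have e3: "sup b t = sup g (s [^] (m + 1))" unfolding b_def t_def using Tm t_def
    by (simp add: sup_assoc sup.absorb2)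
  have "b \<le> x" unfolding b_def x_def using s_le[of g] by (meson order_refl sup_mono)
  then have "inf b t \<le> inf x t" by (simp add: le_infI1)
  then have "deg (inf x t) \<le> deg (inf b t)" by (rule antitone)
  then show ?thesis using L valuation[of x t] valuation[of b t] e3 b_def by simp
qed

lemma iota_step: "iota G deg s g (Suc k) \<le> iota G deg s g k"
proof -
  have e1: "- int (Suc k) = - int k - 1" "- (int (Suc k) - 1) = - int k" "- (int k - 1) = - int k + 1" by simp_all
  show ?thesis unfolding iota_def e1 using step[of g "- int k"] by linarith
qed

end

theorem mainTheorem5:
  fixes G :: "('a::lattice) monoid" and s :: 'a and deg :: "'a \<Rightarrow> int"
  assumes "right_l_group G"
    and "modular_lattice TYPE('a)"
    and "noetherian TYPE('a)"
    and "strong_order_unit G s"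
    and "degree_hom G deg"
    and "g \<le> \<one>\<^bsub>G\<^esub>"
    and "1 \<le> i" and "i \<le> j"
  shows "iota G deg s g j \<le> iota G deg s g i"
proof -
  have gG: "group G" using assms(1) unfolding right_l_group_def by blast
  interpret rlg G s deg
    by (intro rlg.intro rlg_axioms.intro gG assms(1-5))
  show ?thesis using assms(8)
  proof (induction j rule: dec_induct)
    case base then show ?case by simp
  next
    case (step k) then show ?case using iota_step[of g k] by linarith
  qed
qed

end
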